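(* There is a constant $C>0$ such that for all $n\ge 2$ and $D\ge 1$ there exist a deterministic distributed algorithm and, for every graph $G$ of size $n$ and diameter $D$, an advice assignment of size at most $C\,n\log n$, under which the algorithm accomplishes labeled topology recognition in $G$ within time $D$.
   Context: Graphs are finite, simple, undirected, connected, with no node labels; at each node of degree $d$ the incident edges carry distinct port numbers $0,\dots,d-1$ (no coherence between endpoints). Isomorphism is a bijection of nodes preserving edges and port numbers at both endpoints. Size = number of nodes; $\log$ is base 2. Communication model (LOCAL): synchronous rounds, all nodes start simultaneously; in each round every node may send arbitrary messages to all neighbours, receives their messages (knowing the arrival port), and performs arbitrary local computation. Initially a node knows only its degree and its advice. Advice: an oracle knowing the graph assigns each node a binary string; the size of advice is the maximum string length. All nodes run the same deterministic algorithm. Labeled topology recognition: all nodes output the same port-labeled graph $H$ with distinct node labels and each node its own label, such that some isomorphism $G\to H$ maps every node to the node carrying the label it output. Time is the number of rounds until all nodes have output. *)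

theory Defs
  imports Complex_Main
begin

text \<open>Nodes are a finite set of naturals (node names are invisible
to the algorithm; for an output graph H they serve as the distinct node labels).
pg_nbr G v p is the neighbour of v reached through port p (for p < pg_deg G v).\<close>

record pgraph =
  pg_nodes :: "nat set"
  pg_deg   :: "nat \<Rightarrow> nat"
  pg_nbr   :: "nat \<Rightarrow> nat \<Rightarrow> nat"

definition adj_rel :: "pgraph \<Rightarrow> (nat \<times> nat) set" where
  "adj_rel G = {(u, v). u \<in> pg_nodes G \<and> (\<exists>p < pg_deg G u. pg_nbr G u p = v)}"

definition pg_dist :: "pgraph \<Rightarrow> nat \<Rightarrow> nat \<Rightarrow> nat" where
  "pg_dist G u v = (LEAST k. (u, v) \<in> adj_rel G ^^ k)"

definition pg_connected :: "pgraph \<Rightarrow> bool" where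
  "pg_connected G \<longleftrightarrow> (\<forall>u\<in>pg_nodes G. \<forall>v\<in>pg_nodes G. (u, v) \<in> (adj_rel G)\<^sup>*)"

definition diameter :: "pgraph \<Rightarrow> nat" where
  "diameter G = Max {pg_dist G u v | u v. u \<in> pg_nodes G \<and> v \<in> pg_nodes G}"

text \<open>Finite, simple, undirected, connected graph with a valid port numbering:
ports 0..deg v - 1 at v lead to distinct neighbours (no loops, no multi-edges),
and every edge is seen from both endpoints.\<close>
definition pgraph_ok :: "pgraph \<Rightarrow> bool" where
  "pgraph_ok G \<longleftrightarrow>
     finite (pg_nodes G) \<and>
     (\<forall>v\<in>pg_nodes G. \<forall>p < pg_deg G v.
        pg_nbr G v p \<in> pg_nodes G \<and> pg_nbr G v p \<noteq> v \<and>
        (\<exists>q < pg_deg G (pg_nbr G v p). pg_nbr G (pg_nbr G v p) q = v)) \<and>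
     (\<forall>v\<in>pg_nodes G. inj_on (pg_nbr G v) {..<pg_deg G v}) \<and>
     pg_connected G"

definition pg_iso :: "pgraph \<Rightarrow> pgraph \<Rightarrow> (nat \<Rightarrow> nat) \<Rightarrow> bool" where
  "pg_iso G H f \<longleftrightarrow>
     bij_betw f (pg_nodes G) (pg_nodes H) \<and>
     (\<forall>v\<in>pg_nodes G. pg_deg H (f v) = pg_deg G v \<and>
        (\<forall>p < pg_deg G v. pg_nbr H (f v) p = f (pg_nbr G v p)))"

text \<open>Equality of port-labeled graphs as mathematical objects (ignoring junk values
of the representation outside the node set / port range).\<close>
definition pg_same :: "pgraph \<Rightarrow> pgraph \<Rightarrow> bool" where
  "pg_same H H' \<longleftrightarrow> pg_nodes H = pg_nodes H' \<and>
     (\<forall>v\<in>pg_nodes H. pg_deg H v = pg_deg H' v \<and>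
        (\<forall>p < pg_deg H v. pg_nbr H v p = pg_nbr H' v p))"

text \<open>Universal finite data type for local states and messages (arbitrary finite messages).\<close>
datatype data = DNat nat | DList "data list"

text \<open>A deterministic LOCAL algorithm (the same for all nodes):
initial state from degree and advice; message sent on each port; state transition from
the messages received, indexed by arrival port; output (graph H, own label) or None.\<close>
record algorithm =
  alg_init  :: "nat \<Rightarrow> bool list \<Rightarrow> data"
  alg_send  :: "data \<Rightarrow> nat \<Rightarrow> data"
  alg_trans :: "data \<Rightarrow> data list \<Rightarrow> data"
  alg_out   :: "data \<Rightarrow> (pgraph \<times> nat) option"

definition back_port :: "pgraph \<Rightarrow> nat \<Rightarrow> nat \<Rightarrow> nat" where
  "back_port G v p = (THE q. q < pg_deg G (pg_nbr G v p) \<and> pg_nbr G (pg_nbr G v p) q = v)"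

fun run_state :: "algorithm \<Rightarrow> pgraph \<Rightarrow> (nat \<Rightarrow> bool list) \<Rightarrow> nat \<Rightarrow> nat \<Rightarrow> data" where
  "run_state A G adv 0 v = alg_init A (pg_deg G v) (adv v)"
| "run_state A G adv (Suc t) v =
     alg_trans A (run_state A G adv t v)
       (map (\<lambda>p. alg_send A (run_state A G adv t (pg_nbr G v p)) (back_port G v p))
            [0..<pg_deg G v])"

definition out_time :: "algorithm \<Rightarrow> pgraph \<Rightarrow> (nat \<Rightarrow> bool list) \<Rightarrow> nat \<Rightarrow> nat" where
  "out_time A G adv v = (LEAST t. alg_out A (run_state A G adv t v) \<noteq> None)"

definition node_output :: "algorithm \<Rightarrow> pgraph \<Rightarrow> (nat \<Rightarrow> bool list) \<Rightarrow> nat \<Rightarrow> pgraph \<times> nat" where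
  "node_output A G adv v = the (alg_out A (run_state A G adv (out_time A G adv v) v))"

definition advice_size_le :: "pgraph \<Rightarrow> (nat \<Rightarrow> bool list) \<Rightarrow> real \<Rightarrow> bool" where
  "advice_size_le G adv b \<longleftrightarrow> (\<forall>v\<in>pg_nodes G. real (length (adv v)) \<le> b)"

definition solves_LTR :: "algorithm \<Rightarrow> pgraph \<Rightarrow> (nat \<Rightarrow> bool list) \<Rightarrow> nat \<Rightarrow> bool" where
  "solves_LTR A G adv T \<longleftrightarrow>
     (\<forall>v\<in>pg_nodes G. \<exists>t\<le>T. alg_out A (run_state A G adv t v) \<noteq> None) \<and>
     (\<exists>H f. (\<forall>v\<in>pg_nodes G. pg_same (fst (node_output A G adv v)) H) \<and>
            pg_iso G H f \<and>
            (\<forall>v\<in>pg_nodes G. f v = snd (node_output A G adv v)))"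

end

theory Submission imports Defs begin

fun enc :: "nat \<Rightarrow> nat \<Rightarrow> bool list" where
  "enc 0 k = []" | "enc (Suc w) k = odd k # enc w (k div 2)"
fun dec :: "bool list \<Rightarrow> nat" where
  "dec [] = 0" | "dec (b#bs) = (if b then 1 else 0) + 2 * dec bs"

lemma length_enc[simp]: "length (enc w k) = w"
  by (induction w arbitrary: k) auto

lemma dec_enc: "dec (enc w k) = k mod 2^w"
proof (induction w arbitrary: k)
  case 0 then show ?case by simp
next
  case (Suc w)
  have "k mod 2^Suc w = 2 * (k div 2 mod 2^w) + k mod 2"
    by (metis mod_mult2_eq power_Suc)
  then show ?case using Suc by (simp add: odd_iff_mod_2_eq_one)
qed

lemma take_drop_concat:
  "\<forall>x\<in>set xs. length x = w \<Longrightarrow> i < length xs \<Longrightarrow> take w (drop (w*i) (concat xs)) = xs!i"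
proof (induction xs arbitrary: i)
  case Nil then show ?case by simp
next
  case (Cons x xs) then show ?case
    by (cases i) (auto simp: drop_append)
qed

definition wd :: "nat \<Rightarrow> nat" where "wd n = nat \<lceil>log 2 (real n)\<rceil>"

fun own :: "data \<Rightarrow> nat" where
  "own (DList (DNat l # _)) = l" | "own _ = 0"
fun ents :: "data \<Rightarrow> data list" where
  "ents (DList [_, DList es]) = es" | "ents _ = []"

definition entd :: "nat \<Rightarrow> nat list \<Rightarrow> data" where
  "entd a ns = DList [DNat a, DList (map DNat ns)]"
definition stt :: "nat \<Rightarrow> data list \<Rightarrow> data" where
  "stt l es = DList [DNat l, DList es]"
lemma own_stt[simp]: "own (stt l es) = l" and ents_stt[simp]: "ents (stt l es) = es"
  by (simp_all add: stt_def)

definition ini :: "nat \<Rightarrow> nat \<Rightarrow> bool list \<Rightarrow> data" where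
  "ini n d bs = (let w = wd n; l = dec (take w bs);
      ns = map (\<lambda>i. dec (take w (drop (w * Suc i) bs))) [0..<d] in stt l [entd l ns])"
definition nsof :: "data list \<Rightarrow> nat \<Rightarrow> nat list" where
  "nsof es a = (SOME ns. entd a ns \<in> set es)"
definition mkH :: "nat \<Rightarrow> data list \<Rightarrow> pgraph" where
  "mkH n es = \<lparr>pg_nodes = {0..<n}, pg_deg = \<lambda>a. length (nsof es a), pg_nbr = \<lambda>a p. nsof es a ! p\<rparr>"
definition outf :: "nat \<Rightarrow> data \<Rightarrow> (pgraph \<times> nat) option" where
  "outf n s = (if \<forall>a<n. \<exists>ns. entd a ns \<in> set (ents s) then Some (mkH n (ents s), own s) else None)"
definition alg :: "nat \<Rightarrow> algorithm" where
  "alg n = \<lparr>alg_init = ini n, alg_send = \<lambda>s p. s,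
     alg_trans = \<lambda>s ms. stt (own s) (ents s @ concat (map ents ms)), alg_out = outf n\<rparr>"

definition advf :: "pgraph \<Rightarrow> (nat \<Rightarrow> nat) \<Rightarrow> nat \<Rightarrow> nat \<Rightarrow> bool list" where
  "advf G f n v = enc (wd n) (f v) @ concat (map (\<lambda>p. enc (wd n) (f (pg_nbr G v p))) [0..<pg_deg G v])"

locale lt =
  fixes G f n
  assumes ok: "pgraph_ok G" and bij: "bij_betw f (pg_nodes G) {0..<n}" and wbig: "n \<le> 2^(wd n)"
begin

abbreviation "N \<equiv> pg_nodes G"
abbreviation "w \<equiv> wd n"
definition ent :: "nat \<Rightarrow> data" where
  "ent v = entd (f v) (map (\<lambda>p. f (pg_nbr G v p)) [0..<pg_deg G v])"
definition g where "g = inv_into N f"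
definition Hs where "Hs = \<lparr>pg_nodes = {0..<n}, pg_deg = \<lambda>a. pg_deg G (g a),
   pg_nbr = \<lambda>a p. f (pg_nbr G (g a) p)\<rparr>"

lemma nbr_in: "v \<in> N \<Longrightarrow> p < pg_deg G v \<Longrightarrow> pg_nbr G v p \<in> N"
  using ok unfolding pgraph_ok_def by blast

lemma fv: "v \<in> N \<Longrightarrow> f v < n" using bij bij_betwE by fastforce

lemma ini_ok: "v \<in> N \<Longrightarrow> ini n (pg_deg G v) (advf G f n v) = stt (f v) [ent v]"
proof -
  assume v: "v \<in> N"
  have m: "k < n \<Longrightarrow> dec (enc w k) = k" for k using wbig dec_enc
    by (metis dual_order.strict_trans1 mod_less)
  let ?xs = "map (\<lambda>p. enc w (f (pg_nbr G v p))) [0..<pg_deg G v]"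
  have t: "take w (advf G f n v) = enc w (f v)" by (simp add: advf_def)
  have d: "i < pg_deg G v \<Longrightarrow> take w (drop (w * Suc i) (advf G f n v)) = enc w (f (pg_nbr G v i))" for i
  proof -
    assume i: "i < pg_deg G v"
    have "drop (w * Suc i) (advf G f n v) = drop (w*i) (concat ?xs)"
      by (simp add: advf_def drop_append)
    then show ?thesis using take_drop_concat[of ?xs w i] i by simp
  qed
  have "map (\<lambda>i. dec (take w (drop (w * Suc i) (advf G f n v)))) [0..<pg_deg G v]
      = map (\<lambda>p. f (pg_nbr G v p)) [0..<pg_deg G v]"
    by (rule map_cong) (auto simp del: mult_Suc_right simp add: d m fv nbr_in v)
  then show ?thesis unfolding ini_def Let_def t ent_def m[OF fv[OF v]] by (rule arg_cong)
qed


abbreviation "RS \<equiv> run_state (alg n) G (advf G f n)"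
definition K where "K t v = ents (RS t v)"

lemma Ksuc: "K (Suc t) v = K t v @ concat (map (\<lambda>p. K t (pg_nbr G v p)) [0..<pg_deg G v])"
  by (simp add: K_def alg_def comp_def)

lemma rs: "v \<in> N \<Longrightarrow> RS t v = stt (f v) (K t v) \<and> set (K t v) \<subseteq> ent ` N"
proof (induction t arbitrary: v)
  case 0
  then show ?case by (simp add: K_def alg_def ini_ok)
next
  case (Suc t)
  have o0: "RS (Suc t) v = stt (own (RS t v)) (K (Suc t) v)"
    by (simp add: K_def alg_def comp_def)
  have "own (RS t v) = f v" using Suc.IH[OF Suc.prems] by simp
  then have o: "RS (Suc t) v = stt (f v) (K (Suc t) v)" using o0 by simp
  have "set (K (Suc t) v) \<subseteq> ent ` N"
  proof
    fix x assume "x \<in> set (K (Suc t) v)"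
    then have "x \<in> set (K t v) \<or> (\<exists>p < pg_deg G v. x \<in> set (K t (pg_nbr G v p)))"
      unfolding Ksuc by auto
    then show "x \<in> ent ` N" using Suc.IH Suc.prems nbr_in by blast
  qed
  then show ?case using o by simp
qed

lemma Kmono1: "set (K t v) \<subseteq> set (K (Suc t) v)"
  unfolding Ksuc by auto

lemma Kmono: "t \<le> t' \<Longrightarrow> set (K t v) \<subseteq> set (K t' v)"
  using lift_Suc_mono_le[of "\<lambda>t. set (K t v)"] Kmono1 by blast

lemma K0: "v \<in> N \<Longrightarrow> ent v \<in> set (K 0 v)"
  by (simp add: K_def alg_def ini_ok)

lemma complete: "(v, u) \<in> adj_rel G ^^ k \<Longrightarrow> k \<le> t \<Longrightarrow> v \<in> N \<Longrightarrow> ent u \<in> set (K t v)"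
proof (induction k arbitrary: t v)
  case 0
  then show ?case using K0 Kmono[of 0 t] by auto
next
  case (Suc k)
  then obtain x where x: "(v, x) \<in> adj_rel G" "(x, u) \<in> adj_rel G ^^ k"
    by (metis relpow_Suc_D2)
  obtain p where p: "p < pg_deg G v" "pg_nbr G v p = x" using x(1) unfolding adj_rel_def by auto
  obtain t' where t: "t = Suc t'" "k \<le> t'" using Suc(3) by (cases t) auto
  have "ent u \<in> set (K t' x)" using Suc.IH[OF x(2) t(2)] nbr_in p Suc(4) by blast
  then show ?case unfolding t Ksuc using p by force
qed

lemma inj: "inj_on f N" using bij bij_betw_def by blast
lemma g_f: "v \<in> N \<Longrightarrow> g (f v) = v" unfolding g_def using inj by simp

lemma uniq: "v \<in> N \<Longrightarrow> entd a ns \<in> set (K t v) \<Longrightarrow>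
   ns = map (\<lambda>p. f (pg_nbr G (g a) p)) [0..<pg_deg G (g a)]"
proof -
  assume v: "v \<in> N" and e: "entd a ns \<in> set (K t v)"
  then obtain u where u: "u \<in> N" "entd a ns = ent u" using rs[OF v] by blast
  then have a: "a = f u" and m: "map DNat ns = map DNat (map (\<lambda>p. f (pg_nbr G u p)) [0..<pg_deg G u])"
    unfolding ent_def entd_def by auto
  have "ns = map (\<lambda>p. f (pg_nbr G u p)) [0..<pg_deg G u]"
    using m by (metis list.map_comp data.inject(1) inj_onI list.inj_map_strong)
  then show ?thesis using a g_f u by simp
qed

lemma out_ok: "v \<in> N \<Longrightarrow> outf n (RS t v) = Some r \<Longrightarrow> pg_same (fst r) Hs \<and> snd r = f v"
proof -
  assume v: "v \<in> N" and o: "outf n (RS t v) = Some r"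
  have e: "RS t v = stt (f v) (K t v)" using rs[OF v] by blast
  have all: "\<forall>a<n. \<exists>ns. entd a ns \<in> set (K t v)" and r: "r = (mkH n (K t v), f v)"
    using o unfolding e outf_def by (auto split: if_splits)
  have ns: "a < n \<Longrightarrow> nsof (K t v) a = map (\<lambda>p. f (pg_nbr G (g a) p)) [0..<pg_deg G (g a)]" for a
  proof -
    assume "a < n"
    then obtain ns where "entd a ns \<in> set (K t v)" using all by blast
    then have "entd a (nsof (K t v) a) \<in> set (K t v)" unfolding nsof_def by (rule someI)
    then show ?thesis using uniq v by blast
  qed
  show ?thesis unfolding r pg_same_def mkH_def Hs_def using ns by simp
qed

lemma iso: "pg_iso G Hs f"
  unfolding pg_iso_def Hs_def using bij g_f by simp

lemma fin: "finite N" using ok unfolding pgraph_ok_def by blast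

lemma dist: "v \<in> N \<Longrightarrow> u \<in> N \<Longrightarrow> diameter G = D \<Longrightarrow>
   (v, u) \<in> adj_rel G ^^ (pg_dist G v u) \<and> pg_dist G v u \<le> D"
proof -
  assume v: "v \<in> N" and u: "u \<in> N" and D: "diameter G = D"
  have "(v, u) \<in> (adj_rel G)\<^sup>*" using ok v u unfolding pgraph_ok_def pg_connected_def by blast
  then obtain k where "(v, u) \<in> adj_rel G ^^ k" using rtrancl_power by blast
  then have 1: "(v, u) \<in> adj_rel G ^^ (pg_dist G v u)" unfolding pg_dist_def by (rule LeastI)
  have "{pg_dist G u v | u v. u \<in> N \<and> v \<in> N} = (\<lambda>(u,v). pg_dist G u v) ` (N \<times> N)" by auto
  then have "finite {pg_dist G u v | u v. u \<in> N \<and> v \<in> N}" using fin by simp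
  then have "pg_dist G v u \<le> diameter G" unfolding diameter_def using u v by (intro Max_ge) auto
  then show ?thesis using 1 D by simp
qed

lemma gin: "a < n \<Longrightarrow> g a \<in> N \<and> f (g a) = a"

proof -
  assume a: "a < n"
  have fa: "a \<in> f ` N" using bij a unfolding bij_betw_def by auto
  show ?thesis using inv_into_into[OF fa] f_inv_into_f[OF fa] unfolding g_def by simp
qed

lemma outD: "v \<in> N \<Longrightarrow> diameter G = D \<Longrightarrow> outf n (RS D v) \<noteq> None"
proof -
  assume v: "v \<in> N" and D: "diameter G = D"
  have e: "RS D v = stt (f v) (K D v)" using rs[OF v] by blast
  have "\<forall>a<n. \<exists>ns. entd a ns \<in> set (K D v)"
  proof (intro allI impI)
    fix a assume a: "a < n"
    have "ent (g a) \<in> set (K D v)" using dist[OF v _ D, of "g a"] gin[OF a] complete[OF _ _ v] by blast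
    then show "\<exists>ns. entd a ns \<in> set (K D v)" unfolding ent_def using gin[OF a] by auto
  qed
  then show ?thesis unfolding e outf_def by simp
qed

lemma ao: "alg_out (alg n) = outf n" by (simp add: alg_def)

lemma solves: "diameter G = D \<Longrightarrow> solves_LTR (alg n) G (advf G f n) D"
proof -
  assume D: "diameter G = D"
  have ex: "v \<in> N \<Longrightarrow> \<exists>t\<le>D. alg_out (alg n) (RS t v) \<noteq> None" for v
    using outD[OF _ D] by (metis order_refl ao)
  have no: "v \<in> N \<Longrightarrow> pg_same (fst (node_output (alg n) G (advf G f n) v)) Hs \<and>
      snd (node_output (alg n) G (advf G f n) v) = f v" for v
  proof -
    assume v: "v \<in> N"
    have "alg_out (alg n) (RS (out_time (alg n) G (advf G f n) v) v) \<noteq> None"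
      unfolding out_time_def using ex[OF v] by (metis (mono_tags, lifting) LeastI_ex)
    then obtain r where r: "outf n (RS (out_time (alg n) G (advf G f n) v) v) = Some r"
      unfolding ao by blast
    then have "node_output (alg n) G (advf G f n) v = r" unfolding node_output_def ao by simp
    then show ?thesis using out_ok[OF v r] by simp
  qed
  show ?thesis unfolding solves_LTR_def
  proof (intro conjI exI)
    show "\<forall>v\<in>N. \<exists>t\<le>D. alg_out (alg n) (RS t v) \<noteq> None" using ex by blast
    show "\<forall>v\<in>N. pg_same (fst (node_output (alg n) G (advf G f n) v)) Hs" using no by blast
    show "pg_iso G Hs f" by (rule iso)
    show "\<forall>v\<in>N. f v = snd (node_output (alg n) G (advf G f n) v)" using no by simp
  qed
qed

lemma deg_le: "v \<in> N \<Longrightarrow> pg_deg G v + 1 \<le> n"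
proof -
  assume v: "v \<in> N"
  have i: "inj_on (pg_nbr G v) {..<pg_deg G v}" using ok v unfolding pgraph_ok_def by blast
  have s: "pg_nbr G v ` {..<pg_deg G v} \<subseteq> N - {v}" using ok v unfolding pgraph_ok_def by auto
  have "pg_deg G v = card (pg_nbr G v ` {..<pg_deg G v})" using card_image[OF i] by simp
  also have "\<dots> \<le> card (N - {v})" using s fin by (intro card_mono) auto
  also have "\<dots> = card N - 1" using v fin by simp
  finally have "pg_deg G v \<le> card N - 1" .
  moreover have "card N = n" using bij bij_betw_same_card by fastforce
  moreover have "card N \<ge> 1" using v fin by (metis One_nat_def Suc_leI card_gt_0_iff empty_iff)
  ultimately show ?thesis by linarith
qed

lemma adv_len: "v \<in> N \<Longrightarrow> length (advf G f n v) \<le> w * n"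
proof -
  assume v: "v \<in> N"
  have "length (advf G f n v) = w * (pg_deg G v + 1)"
    by (simp add: advf_def length_concat sum_list_triv comp_def)
  also have "\<dots> \<le> w * n" using deg_le[OF v] by (intro mult_le_mono2)
  finally show ?thesis .
qed

end

lemma wd_facts:
  assumes n: "n \<ge> (2::nat)"
  shows "real (wd n) \<le> 2 * log 2 (real n)" and "n \<le> 2 ^ wd n"
proof -
  have L: "log 2 (real n) \<ge> 1" using n by simp
  have c: "real (wd n) = real_of_int \<lceil>log 2 (real n)\<rceil>" unfolding wd_def
    using L by (simp add: ceiling_le_zero)
  show "real (wd n) \<le> 2 * log 2 (real n)" unfolding c using L
    by (smt (verit) of_int_ceiling_le_add_one)
  have "real n = 2 powr log 2 (real n)" using n by simp
  also have "\<dots> \<le> 2 powr real (wd n)" unfolding c by (intro powr_mono) auto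
  also have "\<dots> = real (2 ^ wd n)" by (simp add: powr_realpow)
  finally show "n \<le> 2 ^ wd n" by linarith
qed

theorem proposition5p1:
  shows "\<exists>C::real. C > 0 \<and>
    (\<forall>n D::nat. n \<ge> 2 \<longrightarrow> D \<ge> 1 \<longrightarrow>
      (\<exists>A::algorithm. \<forall>G::pgraph.
         pgraph_ok G \<and> card (pg_nodes G) = n \<and> diameter G = D \<longrightarrow>
         (\<exists>adv. advice_size_le G adv (C * real n * log 2 (real n)) \<and>
                solves_LTR A G adv D)))"
proof (intro exI[of _ 2] conjI allI impI)
  fix n D :: nat
  assume n: "n \<ge> 2" and D1: "D \<ge> 1"
  show "\<exists>A::algorithm. \<forall>G::pgraph.
         pgraph_ok G \<and> card (pg_nodes G) = n \<and> diameter G = D \<longrightarrow>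
         (\<exists>adv. advice_size_le G adv (2 * real n * log 2 (real n)) \<and> solves_LTR A G adv D)"
  proof (intro exI[of _ "alg n"] allI impI)
    fix G assume H: "pgraph_ok G \<and> card (pg_nodes G) = n \<and> diameter G = D"
    have "finite (pg_nodes G)" using H unfolding pgraph_ok_def by blast
    then obtain f where f: "bij_betw f (pg_nodes G) {0..<n}" using ex_bij_betw_finite_nat H by blast
    interpret lt G f n using H f wd_facts(2)[OF n] by unfold_locales auto
    show "\<exists>adv. advice_size_le G adv (2 * real n * log 2 (real n)) \<and> solves_LTR (alg n) G adv D"
    proof (intro exI conjI)
      show "solves_LTR (alg n) G (advf G f n) D" using solves H by blast
      show "advice_size_le G (advf G f n) (2 * real n * log 2 (real n))"
        unfolding advice_size_le_def
      proof
        fix v assume v: "v \<in> pg_nodes G"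
        have "real (length (advf G f n v)) \<le> real (wd n) * real n"
          using adv_len[OF v] by (metis of_nat_le_iff of_nat_mult)
        also have "\<dots> \<le> 2 * log 2 (real n) * real n"
          using wd_facts(1)[OF n] by (intro mult_right_mono) auto
        finally show "real (length (advf G f n v)) \<le> 2 * real n * log 2 (real n)" by (simp add: algebra_simps)
      qed
    qed
  qed
qed auto

end
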